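(* There exist symmetric matrices $C,A_1,\dots,A_m\in\mathbb{S}^n$, $b\in\mathbb{R}^m$ and a nonzero $S\in\mathbb{S}^n_+$ with $C\cdot S=0$ and $A_i\cdot S=0$ for all $i$ such that: the pair (P-SDP): maximize $b^Ty$ s.t. $C-\sum_iy_iA_i\in\mathbb{S}^n_+$, and (D-SDP): minimize $C\cdot X$ s.t. $A_i\cdot X=b_i$, $X\in\mathbb{S}^n_+$, both attain their optimal values and these values are equal; the reduced pair (R/P): maximize $b^Ty$ s.t. $C-\sum_iy_iA_i\in\mathcal{F}$, and (R/D): minimize $C\cdot X$ s.t. $A_i\cdot X=b_i$, $X\in\mathcal{F}^*$, where $\mathcal{F}=\mathbb{S}^n_+\cap S^{\perp}$, both attain their optimal values and these values are equal; and yet there is an optimal solution $X$ of (R/D) for which no $\alpha\in\mathbb{R}$ satisfies $X+\alpha S\in\mathbb{S}^n_+$ (so the dual recovery procedure fails on $X$).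
   Context: $\mathbb{S}^n$ denotes real symmetric $n\times n$ matrices with trace inner product $A\cdot B=\operatorname{trace}(AB)$, $\mathbb{S}^n_+$ the positive semidefinite cone, $S^{\perp}=\{X:S\cdot X=0\}$, and $\mathcal{F}^*=\{Y\in\mathbb{S}^n: Y\cdot X\ge0\ \forall X\in\mathcal{F}\}$. The dual recovery procedure (for one reducing certificate $S$) takes an optimal solution $X$ of (R/D) and seeks $\alpha$ with $X+\alpha S\in\mathbb{S}^n_+$, failing if none exists. *)

theory Defs
  imports Complex_Main
begin

text \<open>n x n real matrices are represented as functions nat => nat => real,
  only entries with indices below n being relevant. Vectors in R^m as nat => real.\<close>

type_synonym rmat = "nat \<Rightarrow> nat \<Rightarrow> real"

definition symm :: "nat \<Rightarrow> rmat \<Rightarrow> bool" where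
  "symm n A \<longleftrightarrow> (\<forall>i<n. \<forall>j<n. A i j = A j i)"

definition tr_inner :: "nat \<Rightarrow> rmat \<Rightarrow> rmat \<Rightarrow> real" where
  "tr_inner n A B = (\<Sum>i<n. \<Sum>j<n. A i j * B j i)"

definition psd :: "nat \<Rightarrow> rmat \<Rightarrow> bool" where
  "psd n A \<longleftrightarrow> symm n A \<and> (\<forall>x::nat \<Rightarrow> real. (\<Sum>i<n. \<Sum>j<n. x i * A i j * x j) \<ge> 0)"

definition face_F :: "nat \<Rightarrow> rmat \<Rightarrow> rmat \<Rightarrow> bool" where
  "face_F n S X \<longleftrightarrow> psd n X \<and> tr_inner n S X = 0"

definition face_F_dual :: "nat \<Rightarrow> rmat \<Rightarrow> rmat \<Rightarrow> bool" where
  "face_F_dual n S Y \<longleftrightarrow> symm n Y \<and> (\<forall>X. face_F n S X \<longrightarrow> tr_inner n Y X \<ge> 0)"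

definition slack :: "nat \<Rightarrow> rmat \<Rightarrow> (nat \<Rightarrow> rmat) \<Rightarrow> (nat \<Rightarrow> real) \<Rightarrow> rmat" where
  "slack m C A y = (\<lambda>i j. C i j - (\<Sum>k<m. y k * A k i j))"

definition bty :: "nat \<Rightarrow> (nat \<Rightarrow> real) \<Rightarrow> (nat \<Rightarrow> real) \<Rightarrow> real" where
  "bty m b y = (\<Sum>k<m. b k * y k)"

text \<open>Primal feasibility with respect to a cone K (given as a predicate on matrices).\<close>
definition primal_feas :: "nat \<Rightarrow> nat \<Rightarrow> rmat \<Rightarrow> (nat \<Rightarrow> rmat) \<Rightarrow> (rmat \<Rightarrow> bool) \<Rightarrow> (nat \<Rightarrow> real) \<Rightarrow> bool" where
  "primal_feas n m C A K y \<longleftrightarrow> K (slack m C A y)"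

definition dual_feas :: "nat \<Rightarrow> nat \<Rightarrow> (nat \<Rightarrow> rmat) \<Rightarrow> (nat \<Rightarrow> real) \<Rightarrow> (rmat \<Rightarrow> bool) \<Rightarrow> rmat \<Rightarrow> bool" where
  "dual_feas n m A b K X \<longleftrightarrow> K X \<and> (\<forall>k<m. tr_inner n (A k) X = b k)"

definition primal_opt where
  "primal_opt n m C A b K y \<longleftrightarrow> primal_feas n m C A K y \<and>
     (\<forall>y'. primal_feas n m C A K y' \<longrightarrow> bty m b y' \<le> bty m b y)"

definition dual_opt where
  "dual_opt n m C A b K X \<longleftrightarrow> dual_feas n m A b K X \<and>
     (\<forall>X'. dual_feas n m A b K X' \<longrightarrow> tr_inner n C X \<le> tr_inner n C X')"

definition attained_no_gap where
  "attained_no_gap n m C A b KP KD \<longleftrightarrow>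
     (\<exists>y X. primal_opt n m C A b KP y \<and> dual_opt n m C A b KD X \<and>
            bty m b y = tr_inner n C X)"

end

theory Submission
  imports Defs
begin

lemma sum2: "(\<Sum>i<(2::nat). f i) = f 0 + f 1"
  by (simp add: numeral_2_eq_2)

definition S0 :: rmat where "S0 = (\<lambda>i j. if i = 0 \<and> j = 0 then 1 else 0)"
definition X0 :: rmat where "X0 = (\<lambda>i j. if i \<noteq> j then 1 else 0)"

lemma psd_zero: "psd n (\<lambda>i j. 0)"
  by (simp add: psd_def symm_def)

lemma psd_S0: "psd 2 S0"
  by (simp add: psd_def symm_def S0_def sum2)

lemma face_off: assumes "face_F 2 S0 Z" shows "Z 0 1 = 0"
proof (rule ccontr)
  assume nz: "Z 0 1 \<noteq> 0"
  from assms have p: "psd 2 Z" and t: "tr_inner 2 S0 Z = 0" by (auto simp: face_F_def)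
  from t have z00: "Z 0 0 = 0" by (simp add: tr_inner_def S0_def sum2)
  from p have sy: "Z 1 0 = Z 0 1" by (auto simp: psd_def symm_def)
  define t0 where "t0 = -(Z 1 1 + 1) / (2 * Z 0 1)"
  from p have "(\<Sum>i<2. \<Sum>j<2. (\<lambda>k. if k = 0 then t0 else 1) i * Z i j * (\<lambda>k. if k = 0 then t0 else 1) j) \<ge> 0"
    unfolding psd_def by (elim conjE allE) assumption
  hence "2 * t0 * Z 0 1 + Z 1 1 \<ge> 0" using z00 sy by (simp add: sum2 algebra_simps)
  moreover have "2 * t0 * Z 0 1 = -(Z 1 1 + 1)" using nz by (simp add: t0_def)
  ultimately show False by linarith
qed

lemma X0_dual: "face_F_dual 2 S0 X0"
  unfolding face_F_dual_def
proof (intro conjI allI impI)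
  show "symm 2 X0" by (simp add: symm_def X0_def)
  fix Z assume h: "face_F 2 S0 Z"
  have "Z 0 1 = 0" using face_off[OF h] .
  moreover have "Z 1 0 = Z 0 1" using h by (auto simp: face_F_def psd_def symm_def)
  ultimately show "tr_inner 2 X0 Z \<ge> 0" by (simp add: tr_inner_def X0_def sum2)
qed

lemma not_psd: "\<not> psd 2 (\<lambda>i j. X0 i j + \<alpha> * S0 i j)"
proof
  assume "psd 2 (\<lambda>i j. X0 i j + \<alpha> * S0 i j)"
  hence "(\<Sum>i<2. \<Sum>j<2. (\<lambda>k. if k = 0 then 1 else -(\<alpha>+1)/2) i * (X0 i j + \<alpha> * S0 i j) * (\<lambda>k. if k = 0 then 1 else -(\<alpha>+1)/2) j) \<ge> 0"
    unfolding psd_def by (elim conjE allE) assumption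
  thus False by (simp add: sum2 X0_def S0_def algebra_simps)
qed

theorem corollary4:
  shows "\<exists>(n::nat) (m::nat) (C::rmat) (A::nat \<Rightarrow> rmat) (b::nat \<Rightarrow> real) (S::rmat).
    symm n C \<and> (\<forall>k<m. symm n (A k)) \<and>
    psd n S \<and> (\<exists>i<n. \<exists>j<n. S i j \<noteq> 0) \<and>
    tr_inner n C S = 0 \<and> (\<forall>k<m. tr_inner n (A k) S = 0) \<and>
    attained_no_gap n m C A b (psd n) (psd n) \<and>
    attained_no_gap n m C A b (face_F n S) (face_F_dual n S) \<and>
    (\<exists>X. dual_opt n m C A b (face_F_dual n S) X \<and>
         \<not> (\<exists>\<alpha>::real. psd n (\<lambda>i j. X i j + \<alpha> * S i j)))"
proof (rule exI[of _ "2::nat"], rule exI[of _ "0::nat"], rule exI[of _ "\<lambda>i j. 0::real"], rule exI[of _ "\<lambda>k i j. 0::real"], rule exI[of _ "\<lambda>k. 0::real"], rule exI[of _ S0], intro conjI)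
  show "symm 2 (\<lambda>i j. 0::real)" by (simp add: symm_def)
  show "psd 2 S0" by (rule psd_S0)
  show "\<exists>i<2. \<exists>j<2. S0 i j \<noteq> 0" proof (intro exI conjI)
    show "(0::nat) < 2" by simp
    show "S0 0 0 \<noteq> 0" by (simp add: S0_def)
    show "(0::nat) < 2" by simp
  qed
  show "tr_inner 2 (\<lambda>i j. 0) S0 = 0" by (simp add: tr_inner_def)
  have sl: "slack 0 (\<lambda>i j. 0) (\<lambda>k i j. 0) y = (\<lambda>i j. 0)" for y by (simp add: slack_def)
  show "attained_no_gap 2 0 (\<lambda>i j. 0) (\<lambda>k i j. 0) (\<lambda>k. 0) (psd 2) (psd 2)"
    unfolding attained_no_gap_def
    by (rule exI[of _ "\<lambda>k. 0"], rule exI[of _ "\<lambda>i j. 0"])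
       (simp add: primal_opt_def dual_opt_def primal_feas_def dual_feas_def sl psd_zero bty_def tr_inner_def)
  have fz: "face_F 2 S0 (\<lambda>i j. 0)" by (simp add: face_F_def psd_zero tr_inner_def)
  have fdz: "face_F_dual 2 S0 (\<lambda>i j. 0)" by (simp add: face_F_dual_def symm_def tr_inner_def)
  show "attained_no_gap 2 0 (\<lambda>i j. 0) (\<lambda>k i j. 0) (\<lambda>k. 0) (face_F 2 S0) (face_F_dual 2 S0)"
    unfolding attained_no_gap_def
    by (rule exI[of _ "\<lambda>k. 0"], rule exI[of _ "\<lambda>i j. 0"])
       (simp add: primal_opt_def dual_opt_def primal_feas_def dual_feas_def sl fz fdz bty_def tr_inner_def)
  show "\<exists>X. dual_opt 2 0 (\<lambda>i j. 0) (\<lambda>k i j. 0) (\<lambda>k. 0) (face_F_dual 2 S0) X \<and>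
         \<not> (\<exists>\<alpha>::real. psd 2 (\<lambda>i j. X i j + \<alpha> * S0 i j))"
    by (rule exI[of _ X0]) (simp add: dual_opt_def dual_feas_def X0_dual tr_inner_def not_psd)
qed simp_all

end
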